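(* Let $n\ge2$, $p\ge1$, $B\ge1$, $\theta\in[0,1/\sqrt3]$, and consider the quantities $\tilde\Pi_B(k)$, $\hat S^{\mathrm{CPSS}}_{n,\tau}$, $L_\theta$ and $\hat S_{\lfloor n/2\rfloor}$ described in the context. Suppose that for each $k\in L_\theta$ the distribution of $\tilde\Pi_B(k)$ (which is supported on $\{0,\frac1B,\frac2B,\dots,1\}$) is unimodal. Let $\tau\in\{\frac12+\frac1B,\frac12+\frac{3}{2B},\frac12+\frac2B,\dots,1\}$ and suppose moreover that $\tau\in\bigl(\min(\tfrac12+\theta^2,\tfrac12+\tfrac1{2B}+\tfrac34\theta^2),1\bigr]$. Define \[C(\tau,B)=\begin{cases}\dfrac{1}{2(2\tau-1-1/(2B))} & \text{if } \tau\in\bigl(\min(\tfrac12+\theta^2,\tfrac12+\tfrac1{2B}+\tfrac34\theta^2),\tfrac34\bigr],\\[2mm] \dfrac{4(1-\tau+1/(2B))}{1+1/B} & \text{if }\tau\in(\tfrac34,1].\end{cases}\] Then \[\mathbb{E}|\hat S^{\mathrm{CPSS}}_{n,\tau}\cap L_\theta|\le C(\tau,B)\,\theta\,\mathbb{E}|\hat S_{\lfloor n/2\rfloor}\cap L_\theta|.\]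
   Context: Let $Z_1,\dots,Z_n$ be i.i.d. random elements. A variable selection procedure is a family of statistics $\hat S_m=\hat S_m(Z_1,\dots,Z_m)$, $m\ge1$, taking values in the subsets of $\{1,\dots,p\}$. For $A=\{i_1<\dots<i_{|A|}\}\subseteq\{1,\dots,n\}$ write $\hat S(A):=\hat S_{|A|}(Z_{i_1},\dots,Z_{i_{|A|}})$, and let $p_{k,m}:=\mathbb{P}(k\in\hat S_m(Z_1,\dots,Z_m))$. Let $\{(A_{2j-1},A_{2j}):j=1,\dots,B\}$ be randomly chosen pairs of subsets of $\{1,\dots,n\}$ of size $\lfloor n/2\rfloor$ with $A_{2j-1}\cap A_{2j}=\emptyset$, the pairs independent of each other and of the data. Define $\hat\Pi_B(k):=\frac1{2B}\sum_{j=1}^{2B}\mathbb{1}_{\{k\in\hat S(A_j)\}}$, $\hat S^{\mathrm{CPSS}}_{n,\tau}:=\{k:\hat\Pi_B(k)\ge\tau\}$, and $\tilde\Pi_B(k):=\frac1B\sum_{j=1}^B\mathbb{1}_{\{k\in\hat S(A_{2j-1})\}}\mathbb{1}_{\{k\in\hat S(A_{2j})\}}$. Let $L_\theta=\{k:p_{k,\lfloor n/2\rfloor}\le\theta\}$. A probability mass function $f$ on $\{0,\frac1B,\dots,1\}$, written $f_i=f(i/B)$, is unimodal if there is $m\in\{0,\dots,B\}$ with $f_0\le f_1\le\dots\le f_m$ and $f_m\ge f_{m+1}\ge\dots\ge f_B$. *)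

theory Defs
  imports "HOL-Probability.Probability"
begin

text \<open>A selection procedure is a family S m of statistics; S m takes the sample
  z_1,...,z_m encoded as a function on the indices 1..m.\<close>

definition Shat :: "(nat \<Rightarrow> (nat \<Rightarrow> 'z) \<Rightarrow> nat set) \<Rightarrow> (nat \<Rightarrow> 'a \<Rightarrow> 'z) \<Rightarrow> nat set \<Rightarrow> 'a \<Rightarrow> nat set" where
  "Shat S Z A w = S (card A) (\<lambda>i. Z (sorted_list_of_set A ! (i - 1)) w)"

definition sel_prob :: "'a measure \<Rightarrow> (nat \<Rightarrow> (nat \<Rightarrow> 'z) \<Rightarrow> nat set) \<Rightarrow> (nat \<Rightarrow> 'a \<Rightarrow> 'z) \<Rightarrow> nat \<Rightarrow> nat \<Rightarrow> real" where
  "sel_prob P S Z m k = measure P {w \<in> space P. k \<in> Shat S Z {1..m} w}"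

text \<open>Ap j w = (A_{2j-1}, A_{2j}) for j = 1..B.\<close>
definition Pi_hat :: "(nat \<Rightarrow> (nat \<Rightarrow> 'z) \<Rightarrow> nat set) \<Rightarrow> (nat \<Rightarrow> 'a \<Rightarrow> 'z) \<Rightarrow> (nat \<Rightarrow> 'a \<Rightarrow> nat set \<times> nat set) \<Rightarrow> nat \<Rightarrow> nat \<Rightarrow> 'a \<Rightarrow> real" where
  "Pi_hat S Z Ap B k w =
     (\<Sum>j=1..B. of_bool (k \<in> Shat S Z (fst (Ap j w)) w) + of_bool (k \<in> Shat S Z (snd (Ap j w)) w)) / (2 * real B)"

definition Pi_tilde :: "(nat \<Rightarrow> (nat \<Rightarrow> 'z) \<Rightarrow> nat set) \<Rightarrow> (nat \<Rightarrow> 'a \<Rightarrow> 'z) \<Rightarrow> (nat \<Rightarrow> 'a \<Rightarrow> nat set \<times> nat set) \<Rightarrow> nat \<Rightarrow> nat \<Rightarrow> 'a \<Rightarrow> real" where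
  "Pi_tilde S Z Ap B k w =
     (\<Sum>j=1..B. of_bool (k \<in> Shat S Z (fst (Ap j w)) w) * of_bool (k \<in> Shat S Z (snd (Ap j w)) w)) / real B"

definition S_CPSS :: "(nat \<Rightarrow> (nat \<Rightarrow> 'z) \<Rightarrow> nat set) \<Rightarrow> (nat \<Rightarrow> 'a \<Rightarrow> 'z) \<Rightarrow> (nat \<Rightarrow> 'a \<Rightarrow> nat set \<times> nat set) \<Rightarrow> nat \<Rightarrow> nat \<Rightarrow> real \<Rightarrow> 'a \<Rightarrow> nat set" where
  "S_CPSS S Z Ap B p \<tau> w = {k \<in> {1..p}. Pi_hat S Z Ap B k w \<ge> \<tau>}"

definition L_theta :: "'a measure \<Rightarrow> (nat \<Rightarrow> (nat \<Rightarrow> 'z) \<Rightarrow> nat set) \<Rightarrow> (nat \<Rightarrow> 'a \<Rightarrow> 'z) \<Rightarrow> nat \<Rightarrow> nat \<Rightarrow> real \<Rightarrow> nat set" where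
  "L_theta P S Z n p \<theta> = {k \<in> {1..p}. sel_prob P S Z (n div 2) k \<le> \<theta>}"

text \<open>Unimodality of a pmf f on {0,1/B,...,1}, written f i = f(i/B).\<close>
definition unimodal :: "(nat \<Rightarrow> real) \<Rightarrow> nat \<Rightarrow> bool" where
  "unimodal f B \<longleftrightarrow> (\<exists>m\<le>B. (\<forall>i<m. f i \<le> f (Suc i)) \<and> (\<forall>i. m \<le> i \<and> i < B \<longrightarrow> f (Suc i) \<le> f i))"

definition C_tau :: "real \<Rightarrow> nat \<Rightarrow> real" where
  "C_tau \<tau> B = (if \<tau> \<le> 3/4 then 1 / (2 * (2 * \<tau> - 1 - 1 / (2 * real B)))
                 else 4 * (1 - \<tau> + 1 / (2 * real B)) / (1 + 1 / real B))"

end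

theory Submission
  imports Defs
begin

lemma abel_sum:
  fixes g f :: "nat \<Rightarrow> real"
  shows "(\<Sum>i\<le>B. g i * f i) = (\<Sum>i\<le>B. g i) * f B + (\<Sum>i<B. (\<Sum>l\<le>i. g l) * (f i - f (Suc i)))"
proof (induction B)
  case 0 then show ?case by simp
next
  case (Suc B)
  have "(\<Sum>i\<le>Suc B. g i * f i) = (\<Sum>i\<le>B. g i * f i) + g (Suc B) * f (Suc B)" by simp
  also have "\<dots> = (\<Sum>i\<le>B. g i) * f B + (\<Sum>i<B. (\<Sum>l\<le>i. g l) * (f i - f (Suc i))) + g (Suc B) * f (Suc B)"
    using Suc by simp
  also have "\<dots> = (\<Sum>i\<le>Suc B. g i) * f (Suc B) + (\<Sum>i<Suc B. (\<Sum>l\<le>i. g l) * (f i - f (Suc i)))"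
    by (simp add: algebra_simps)
  finally show ?case .
qed

lemma abel_sign:
  fixes g f :: "nat \<Rightarrow> real"
  assumes "m \<le> B" "\<forall>i<m. f i \<le> f (Suc i)" "\<forall>i. m \<le> i \<and> i < B \<longrightarrow> f (Suc i) \<le> f i"
    and "f B \<ge> 0"
    and G1: "\<And>i. i < m \<Longrightarrow> (\<Sum>l\<le>i. g l) \<ge> 0"
    and G2: "\<And>i. m \<le> i \<Longrightarrow> i \<le> B \<Longrightarrow> (\<Sum>l\<le>i. g l) \<le> 0"
  shows "(\<Sum>i\<le>B. g i * f i) \<le> 0"
proof -
  have a: "(\<Sum>i\<le>B. g i) * f B \<le> 0"
    using G2[of B] assms(1,4) by (simp add: mult_nonpos_nonneg)
  have b: "(\<Sum>i<B. (\<Sum>l\<le>i. g l) * (f i - f (Suc i))) \<le> 0"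
  proof (rule sum_nonpos)
    fix i assume i: "i \<in> {..<B}"
    show "(\<Sum>l\<le>i. g l) * (f i - f (Suc i)) \<le> 0"
    proof (cases "i < m")
      case True
      then show ?thesis using G1[of i] assms(2) by (simp add: mult_nonneg_nonpos)
    next
      case False
      then show ?thesis using G2[of i] assms(3) i by (simp add: mult_nonpos_nonneg)
    qed
  qed
  show ?thesis using a b abel_sum[where B=B and g=g and f=f] by linarith
qed

lemma Gr_closed:
  "(\<Sum>l\<le>j. of_bool (t \<le> l) - R * real l) = max 0 (real j + 1 - real t) - R * real j * (real j + 1) / 2"
proof (induction j)
  case 0 then show ?case by (cases t) auto
next
  case (Suc j)
  have "t \<le> j + 1 \<or> t = j + 2 \<or> t > j + 2" by arith
  then show ?case unfolding sum.atMost_Suc Suc.IH by (elim disjE) (auto simp: algebra_simps max_def)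
qed

lemma Gl_closed:
  "(\<Sum>l\<le>j. real t - 1 + (real t + 1) * of_bool (t \<le> l) - 2 * real l)
    = (real t - 1) * (real j + 1) + (real t + 1) * max 0 (real j + 1 - real t) - real j * (real j + 1)"
proof (induction j)
  case 0 then show ?case by (cases t) auto
next
  case (Suc j)
  have "t \<le> j + 1 \<or> t = j + 2 \<or> t > j + 2" by arith
  then show ?case unfolding sum.atMost_Suc Suc.IH by (elim disjE) (auto simp: algebra_simps max_def)
qed

lemma Gl'_closed:
  assumes "t \<ge> 1"
  shows "(\<Sum>l\<le>j. real t - 1 + (real t + 1) * of_bool (t \<le> l) - 2 * real (min l t))
    = (if j < t then (real j + 1) * (real t - 1 - real j) else 0)"
proof (induction j)
  case 0 then show ?case using assms by auto
next
  case (Suc j)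
  have "t \<le> j \<or> t = j + 1 \<or> t > j + 1" by arith
  then show ?case unfolding sum.atMost_Suc Suc.IH using assms by (elim disjE) (auto simp: algebra_simps)
qed

definition Rb :: "nat \<Rightarrow> nat \<Rightarrow> real" where
  "Rb B t = (if 2*t \<le> B then 1 / (2 * real t - 1) else 2 * (real B - real t + 1) / (real B * (real B + 1)))"

lemma Rb_nonneg: assumes "2 \<le> t" "t \<le> B" shows "Rb B t \<ge> 0"
  using assms unfolding Rb_def by auto

lemma ineq_i:
  assumes t: "2 \<le> t" "t \<le> B" and j: "j \<le> B"
  shows "max 0 (real j + 1 - real t) \<le> Rb B t * real j * (real j + 1) / 2"
proof (cases "t \<le> j")
  case False
  then have "max 0 (real j + 1 - real t) = 0" by auto
  moreover have "Rb B t * real j * (real j + 1) / 2 \<ge> 0" using Rb_nonneg[OF t] by simp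
  ultimately show ?thesis by simp
next
  case tj: True
  then have mx: "max 0 (real j + 1 - real t) = real j + 1 - real t" by auto
  show ?thesis
  proof (cases "2*t \<le> B")
    case True
    then have R: "Rb B t = 1 / (2 * real t - 1)" by (simp add: Rb_def)
    define x where "x = real j - 2 * real t + 1"
    have x: "x * (x + 1) \<ge> 0"
    proof (cases "2*t \<le> j + 1")
      case True
      then have "x \<ge> 0" unfolding x_def by linarith
      then show ?thesis by simp
    next
      case False
      then have "x + 1 \<le> 0" unfolding x_def by linarith
      moreover have "x \<le> 0" using False unfolding x_def by linarith
      ultimately show ?thesis by (simp add: mult_nonpos_nonpos)
    qed
    have id: "real j * (real j + 1) - 2 * (2 * real t - 1) * (real j + 1 - real t) = x * (x + 1)"
      unfolding x_def by (simp add: algebra_simps)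
    have pos: "2 * real t - 1 > 0" using t by simp
    have "real j + 1 - real t \<le> real j * (real j + 1) / (2 * (2 * real t - 1))"
      using id x pos by (simp add: field_simps)
    then show ?thesis unfolding mx R by (simp add: field_simps)
  next
    case False
    then have R: "Rb B t = 2 * (real B - real t + 1) / (real B * (real B + 1))" by (simp add: Rb_def)
    define x where "x = real j + 1 - real t"
    define y where "y = real B + 1 - real t"
    have id: "y * real j * (real j + 1) - x * real B * (real B + 1) = (y - x) * (real t * (real t - 1) - x * y)"
      unfolding x_def y_def by (simp add: algebra_simps)
    have yx: "y - x \<ge> 0" unfolding x_def y_def using j by simp
    have prod: "(y - x) * (real t * (real t - 1) - x * y) \<ge> 0"
    proof (cases "j = B")
      case True then show ?thesis unfolding x_def y_def by simp
    next
      case False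
      then have "x \<le> real t - 1" "y \<le> real t" "x \<ge> 0" "y \<ge> 0" unfolding x_def y_def using j tj \<open>\<not> 2*t \<le> B\<close> by auto
      then have "x * y \<le> (real t - 1) * real t" by (intro mult_mono) auto
      then have "real t * (real t - 1) - x * y \<ge> 0" by (simp add: algebra_simps)
      then show ?thesis using yx by (rule mult_nonneg_nonneg[rotated])
    qed
    have Bpos: "real B * (real B + 1) > 0" using t by simp
    have "x * real B * (real B + 1) \<le> y * real j * (real j + 1)" using id prod by linarith
    then have "x \<le> y * real j * (real j + 1) / (real B * (real B + 1))"
      using Bpos by (simp add: field_simps)
    moreover have "Rb B t * real j * (real j + 1) / 2 = y * real j * (real j + 1) / (real B * (real B + 1))"
      unfolding R y_def using Bpos by (simp add: field_simps)
    ultimately show ?thesis unfolding mx x_def by simp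
  qed
qed

lemma line_to_ratio:
  fixes M T :: real
  assumes t: "2 \<le> t" "t \<le> B" and M0: "M \<ge> 0" and MB: "3 * M \<le> real B"
    and Mc: "2 * M < real t \<or> 3 * M < 2 * (real t - 1)"
    and line: "real t - 1 + (real t + 1) * T \<le> 2 * M"
  shows "T \<le> Rb B t * M"
proof -
  have key: "M * (2 - (real t + 1) * Rb B t) \<le> real t - 1"
  proof (cases "2*t \<le> B")
    case True
    then have R: "Rb B t = 1 / (2 * real t - 1)" by (simp add: Rb_def)
    have pos: "2 * real t - 1 > 0" using t by simp
    have e: "2 - (real t + 1) * Rb B t = 3 * (real t - 1) / (2 * real t - 1)"
      unfolding R using pos by (simp add: field_simps)
    have m3: "3 * M \<le> 2 * real t - 1" using Mc t by auto
    have t1: "real t - 1 \<ge> 0" using t by simp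
    have "(3 * M) * (real t - 1) \<le> (2 * real t - 1) * (real t - 1)"
      by (rule mult_right_mono[OF m3 t1])
    then have "M * (3 * (real t - 1)) \<le> (real t - 1) * (2 * real t - 1)" by (simp add: algebra_simps)
    then have "M * (3 * (real t - 1)) / (2 * real t - 1) \<le> real t - 1"
      using pos by (simp add: pos_divide_le_eq)
    then show ?thesis unfolding e by simp
  next
    case False
    then have R: "Rb B t = 2 * (real B - real t + 1) / (real B * (real B + 1))" by (simp add: Rb_def)
    have Bpos: "real B * (real B + 1) > 0" using t by simp
    show ?thesis
    proof (cases "2 - (real t + 1) * Rb B t \<le> 0")
      case True
      then have "M * (2 - (real t + 1) * Rb B t) \<le> 0" using M0 by (simp add: mult_nonneg_nonpos)
      then show ?thesis using t by simp
    next
      case False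
      have fac: "(2 * real t - real B - 1) * (2 * real B - real t + 1) \<ge> 0"
        using \<open>\<not> 2*t \<le> B\<close> t by (intro mult_nonneg_nonneg) auto
      have id: "3 * (real t - 1) * (real B + 1) - (2 * real B * (real B + 1) - 2 * (real t + 1) * (real B - real t + 1))
          = (2 * real t - real B - 1) * (2 * real B - real t + 1)"
        by (simp add: algebra_simps)
      have e: "real B / 3 * (2 - (real t + 1) * Rb B t)
          = (2 * real B * (real B + 1) - 2 * (real t + 1) * (real B - real t + 1)) / (3 * (real B + 1))"
        unfolding R using Bpos by (simp add: field_simps)
      have "(2 * real B * (real B + 1) - 2 * (real t + 1) * (real B - real t + 1)) \<le> (real t - 1) * (3 * (real B + 1))"
        using id fac by (simp add: algebra_simps)
      then have "real B / 3 * (2 - (real t + 1) * Rb B t) \<le> real t - 1"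
        unfolding e by (simp add: divide_le_eq)
      moreover have "M * (2 - (real t + 1) * Rb B t) \<le> real B / 3 * (2 - (real t + 1) * Rb B t)"
        using False MB by (intro mult_right_mono) auto
      ultimately show ?thesis by linarith
    qed
  qed
  have "(real t + 1) * T \<le> 2 * M - (real t - 1)" using line by linarith
  also have "\<dots> \<le> (real t + 1) * (Rb B t * M)" using key by (simp add: algebra_simps)
  finally show ?thesis using t by simp
qed

lemma unimodal_bound:
  fixes f :: "nat \<Rightarrow> real"
  assumes t: "2 \<le> t" "t \<le> B"
    and fnn: "\<And>i. i \<le> B \<Longrightarrow> f i \<ge> 0"
    and uni: "unimodal f B"
    and sum1: "(\<Sum>i\<le>B. f i) = 1"
    and MB: "3 * (\<Sum>i\<le>B. real i * f i) \<le> real B"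
    and Mc: "2 * (\<Sum>i\<le>B. real i * f i) < real t \<or> 3 * (\<Sum>i\<le>B. real i * f i) < 2 * (real t - 1)"
  shows "(\<Sum>i\<le>B. of_bool (t \<le> i) * f i) \<le> Rb B t * (\<Sum>i\<le>B. real i * f i)"
proof -
  define M where "M = (\<Sum>i\<le>B. real i * f i)"
  define \<iota> where "\<iota> = (\<lambda>l::nat. of_bool (t \<le> l) :: real)"
  define T where "T = (\<Sum>i\<le>B. \<iota> i * f i)"
  define R where "R = Rb B t"
  have R0: "R \<ge> 0" unfolding R_def using Rb_nonneg[OF t] .
  have M0: "M \<ge> 0" unfolding M_def using fnn by (intro sum_nonneg) auto
  have fB: "f B \<ge> 0" using fnn by simp
  have MB': "3 * M \<le> real B" and Mc': "2 * M < real t \<or> 3 * M < 2 * (real t - 1)"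
    using MB Mc unfolding M_def by auto
  define gr where "gr = (\<lambda>l::nat. \<iota> l - R * real l)"
  define gl where "gl = (\<lambda>l::nat. real t - 1 + (real t + 1) * \<iota> l - 2 * real l)"
  define gl' where "gl' = (\<lambda>l::nat. real t - 1 + (real t + 1) * \<iota> l - 2 * real (min l t))"
  have Sgr: "(\<Sum>i\<le>B. gr i * f i) = T - R * M"
    unfolding gr_def T_def M_def by (simp add: algebra_simps sum_subtractf sum_distrib_left)
  have Sgl: "(\<Sum>i\<le>B. gl i * f i) = real t - 1 + (real t + 1) * T - 2 * M"
  proof -
    have "(\<Sum>i\<le>B. gl i * f i) = (real t - 1) * (\<Sum>i\<le>B. f i) + (real t + 1) * T - 2 * M"
      unfolding gl_def T_def M_def
      by (simp add: algebra_simps sum_subtractf sum.distrib sum_distrib_left)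
    then show ?thesis using sum1 by simp
  qed
  have Sgl': "(\<Sum>i\<le>B. gl' i * f i) \<ge> real t - 1 + (real t + 1) * T - 2 * M"
  proof -
    have "(\<Sum>i\<le>B. gl' i * f i) = (real t - 1) * (\<Sum>i\<le>B. f i) + (real t + 1) * T - 2 * (\<Sum>i\<le>B. real (min i t) * f i)"
      unfolding gl'_def T_def
      by (simp add: algebra_simps sum_subtractf sum.distrib sum_distrib_left)
    moreover have "(\<Sum>i\<le>B. real (min i t) * f i) \<le> M"
      unfolding M_def using fnn by (intro sum_mono mult_right_mono) auto
    ultimately show ?thesis using sum1 by simp
  qed
  have Gr: "(\<Sum>l\<le>i. gr l) = max 0 (real i + 1 - real t) - R * real i * (real i + 1) / 2" for i
    unfolding gr_def \<iota>_def by (rule Gr_closed)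
  have Gr_le: "(\<Sum>l\<le>i. gr l) \<le> 0" if "i \<le> B" for i
    using ineq_i[OF t that] unfolding Gr R_def by simp
  have Gl: "(\<Sum>l\<le>i. gl l) = (real t - 1) * (real i + 1) + (real t + 1) * max 0 (real i + 1 - real t) - real i * (real i + 1)" for i
    unfolding gl_def \<iota>_def by (rule Gl_closed)
  have Gl': "(\<Sum>l\<le>i. gl' l) = (if i < t then (real i + 1) * (real t - 1 - real i) else 0)" for i
    unfolding gl'_def \<iota>_def using t by (intro Gl'_closed) auto
  obtain m where m: "m \<le> B" "\<forall>i<m. f i \<le> f (Suc i)" "\<forall>i. m \<le> i \<and> i < B \<longrightarrow> f (Suc i) \<le> f i"
    using uni unfolding unimodal_def by blast
  have final_line: "T \<le> R * M" if line: "real t - 1 + (real t + 1) * T \<le> 2 * M"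
    unfolding R_def by (rule line_to_ratio[OF t M0 MB' Mc' line])
  consider (m0) "m = 0" | (mhi) "t - 1 \<le> m" | (mmid) "1 \<le> m" "m < t - 1" by linarith
  then have "T \<le> R * M"
  proof cases
    case m0
    have "(\<Sum>i\<le>B. gr i * f i) \<le> 0"
      by (rule abel_sign[OF m fB]) (use m0 Gr_le in auto)
    then show ?thesis using Sgr by simp
  next
    case mhi
    have "(\<Sum>i\<le>B. gl' i * f i) \<le> 0"
    proof (rule abel_sign[OF m fB])
      fix i assume "i < m"
      show "(\<Sum>l\<le>i. gl' l) \<ge> 0" unfolding Gl' by auto
    next
      fix i assume "m \<le> i" "i \<le> B"
      show "(\<Sum>l\<le>i. gl' l) \<le> 0"
      proof (cases "i < t")
        case True
        then have "i = t - 1" using mhi \<open>m \<le> i\<close> by simp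
        then have "real i = real t - 1" using t by (simp add: of_nat_diff)
        then show ?thesis unfolding Gl' by simp
      qed (simp add: Gl')
    qed
    then show ?thesis using Sgl' final_line by linarith
  next
    case mmid
    define \<alpha> where "\<alpha> = R * (real m - 1) / 2"
    define \<beta> where "\<beta> = real t - real m"
    have \<alpha>0: "\<alpha> \<ge> 0" unfolding \<alpha>_def using R0 mmid by simp
    have \<beta>0: "\<beta> > 0" unfolding \<beta>_def using mmid by simp
    define g where "g = (\<lambda>l. \<alpha> * gl l + \<beta> * gr l)"
    have Sg: "(\<Sum>i\<le>B. g i * f i) = \<alpha> * (real t - 1 + (real t + 1) * T - 2 * M) + \<beta> * (T - R * M)"
    proof -
      have "(\<Sum>i\<le>B. g i * f i) = \<alpha> * (\<Sum>i\<le>B. gl i * f i) + \<beta> * (\<Sum>i\<le>B. gr i * f i)"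
        unfolding g_def by (simp add: algebra_simps sum.distrib sum_distrib_left)
      then show ?thesis using Sgl Sgr by simp
    qed
    have G: "(\<Sum>l\<le>i. g l) = \<alpha> * (\<Sum>l\<le>i. gl l) + \<beta> * (\<Sum>l\<le>i. gr l)" for i
      unfolding g_def by (simp add: sum.distrib sum_distrib_left)
    have Glow: "(\<Sum>l\<le>i. g l) = R * (real i + 1) * (real t - 1) * (real m - 1 - real i) / 2" if "i < t" for i
    proof -
      have mx: "max 0 (real i + 1 - real t) = 0" using that by auto
      show ?thesis unfolding G Gl Gr mx \<alpha>_def \<beta>_def by (simp add: field_simps)
    qed
    have "(\<Sum>i\<le>B. g i * f i) \<le> 0"
    proof (rule abel_sign[OF m fB])
      fix i assume i: "i < m"
      then have "i < t" using mmid by simp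
      have "R * (real i + 1) * (real t - 1) * (real m - 1 - real i) / 2 \<ge> 0"
        using R0 i t by simp
      then show "(\<Sum>l\<le>i. g l) \<ge> 0" unfolding Glow[OF \<open>i < t\<close>] .
    next
      fix i assume i: "m \<le> i" "i \<le> B"
      show "(\<Sum>l\<le>i. g l) \<le> 0"
      proof (cases "i < t")
        case True
        have "R * (real i + 1) * (real t - 1) * (real m - 1 - real i) \<le> 0"
          using R0 i t by (intro mult_nonneg_nonpos) auto
        then show ?thesis unfolding Glow[OF True] by simp
      next
        case False
        have mx: "max 0 (real i + 1 - real t) = real i + 1 - real t" using False by auto
        have "(\<Sum>l\<le>i. gl l) = (real i + 1 - real t) * (real t - real i)"
          unfolding Gl mx by (simp add: algebra_simps)
        also have "\<dots> \<le> 0" using False by (intro mult_nonneg_nonpos) auto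
        finally have "\<alpha> * (\<Sum>l\<le>i. gl l) \<le> 0" using \<alpha>0 by (simp add: mult_nonneg_nonpos)
        moreover have "\<beta> * (\<Sum>l\<le>i. gr l) \<le> 0" using \<beta>0 Gr_le[OF i(2)] by (simp add: mult_nonneg_nonpos)
        ultimately show ?thesis unfolding G by simp
      qed
    qed
    then have comb: "\<alpha> * (real t - 1 + (real t + 1) * T - 2 * M) + \<beta> * (T - R * M) \<le> 0" using Sg by simp
    show ?thesis
    proof (rule ccontr)
      assume "\<not> T \<le> R * M"
      then have "\<beta> * (T - R * M) > 0" using \<beta>0 by simp
      then have "\<alpha> * (real t - 1 + (real t + 1) * T - 2 * M) < 0" using comb by linarith
      then have "real t - 1 + (real t + 1) * T - 2 * M < 0" using \<alpha>0
        by (metis mult_nonneg_nonneg not_less)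
      then have "T \<le> R * M" using final_line by linarith
      then show False using \<open>\<not> T \<le> R * M\<close> by simp
    qed
  qed
  then show ?thesis unfolding T_def M_def R_def \<iota>_def .
qed

definition sig :: "nat set \<Rightarrow> nat \<Rightarrow> nat" where
  "sig A i = sorted_list_of_set A ! (i - 1)"

lemma sig_mem: assumes "finite A" "i \<in> {1..card A}" shows "sig A i \<in> A"
proof -
  have "i - 1 < length (sorted_list_of_set A)" using assms by auto
  then have "sorted_list_of_set A ! (i - 1) \<in> set (sorted_list_of_set A)" by (rule nth_mem)
  then show ?thesis using assms unfolding sig_def by simp
qed

lemma sig_inj: assumes "finite A" shows "inj_on (sig A) {1..card A}"
proof (rule inj_onI)
  fix i j assume i: "i \<in> {1..card A}" and j: "j \<in> {1..card A}" and e: "sig A i = sig A j"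
  have d: "distinct (sorted_list_of_set A)" by simp
  have "i - 1 < length (sorted_list_of_set A)" "j - 1 < length (sorted_list_of_set A)"
    using i j assms by auto
  then have "i - 1 = j - 1" using e d unfolding sig_def by (simp add: nth_eq_iff_index_eq)
  then show "i = j" using i j by auto
qed

lemma Shat_sig: "Shat S Z A w = S (card A) (\<lambda>i. Z (sig A i) w)"
  unfolding Shat_def sig_def by simp

locale cpss = prob_space P for P :: "'a measure" +
  fixes N :: "'z measure" and Z :: "nat \<Rightarrow> 'a \<Rightarrow> 'z"
    and S :: "nat \<Rightarrow> (nat \<Rightarrow> 'z) \<Rightarrow> nat set"
    and Ap :: "nat \<Rightarrow> 'a \<Rightarrow> nat set \<times> nat set"
    and n B :: nat
  assumes n2: "n \<ge> 2" and Bpos: "B \<ge> 1"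
    and Z_indep: "indep_vars (\<lambda>_. N) Z {1..n}"
    and Z_ident: "\<forall>i\<in>{1..n}. distr P N (Z i) = distr P N (Z 1)"
    and S_local: "\<forall>m z z'. (\<forall>i\<in>{1..m}. z i = z' i) \<longrightarrow> S m z = S m z'"
    and S_meas: "\<forall>m. S m \<in> measurable (PiM {1..m} (\<lambda>_. N)) (count_space UNIV)"
    and Ap_sets: "\<forall>j\<in>{1..B}. \<forall>w\<in>space P.
         fst (Ap j w) \<subseteq> {1..n} \<and> snd (Ap j w) \<subseteq> {1..n} \<and>
         card (fst (Ap j w)) = n div 2 \<and> card (snd (Ap j w)) = n div 2 \<and>
         fst (Ap j w) \<inter> snd (Ap j w) = {}"
    and Ap_indep: "indep_vars (\<lambda>_. count_space UNIV) Ap {1..B}"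
    and Ap_Z_indep: "indep_set
         {(\<lambda>w. \<lambda>i\<in>{1..n}. Z i w) -` X \<inter> space P | X. X \<in> sets (PiM {1..n} (\<lambda>_. N))}
         {(\<lambda>w. \<lambda>j\<in>{1..B}. Ap j w) -` Y \<inter> space P | Y. Y \<in> sets (PiM {1..B} (\<lambda>_. count_space UNIV))}"
begin

abbreviation "m0 \<equiv> n div 2"

lemma Z_meas: "i \<in> {1..n} \<Longrightarrow> Z i \<in> measurable P N"
  using Z_indep unfolding indep_vars_def by auto

lemma Ap_meas: "j \<in> {1..B} \<Longrightarrow> Ap j \<in> measurable P (count_space UNIV)"
  using Ap_indep unfolding indep_vars_def by auto

lemma Shat_restrict:
  assumes "finite A"
  shows "Shat S Z A w = S (card A) (\<lambda>i\<in>{1..card A}. Z (sig A i) w)"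
  unfolding Shat_sig using S_local by (intro S_local[rule_format]) auto

lemma S_local': "(\<And>i. i \<in> {1..m} \<Longrightarrow> z i = z' i) \<Longrightarrow> S m z = S m z'"
  using S_local by blast

lemma Shat_event:
  assumes A: "A \<subseteq> {1..n}"
  shows "{w \<in> space P. k \<in> Shat S Z A w} \<in> sets P"
proof -
  have fin: "finite A" using A finite_subset by blast
  have V: "(\<lambda>w. \<lambda>i\<in>{1..card A}. Z (sig A i) w) \<in> measurable P (PiM {1..card A} (\<lambda>_. N))"
  proof (intro measurable_restrict Z_meas)
    fix i assume "i \<in> {1..card A}"
    then show "sig A i \<in> {1..n}" using sig_mem[OF fin] A by blast
  qed
  have F: "(\<lambda>w. S (card A) (\<lambda>i\<in>{1..card A}. Z (sig A i) w)) \<in> measurable P (count_space UNIV)"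
    using measurable_compose[OF V] S_meas by blast
  have "{w \<in> space P. k \<in> Shat S Z A w} = (\<lambda>w. S (card A) (\<lambda>i\<in>{1..card A}. Z (sig A i) w)) -` {X. k \<in> X} \<inter> space P"
    using Shat_restrict[OF fin] by auto
  also have "\<dots> \<in> sets P" using measurable_sets[OF F, of "{X. k \<in> X}"] by simp
  finally show ?thesis .
qed

definition Pairs :: "(nat set \<times> nat set) set" where
  "Pairs = {x \<in> Pow {1..n} \<times> Pow {1..n}. card (fst x) = m0 \<and> card (snd x) = m0 \<and> fst x \<inter> snd x = {}}"

lemma finite_Pairs: "finite Pairs"
  unfolding Pairs_def by (rule finite_subset[of _ "Pow {1..n} \<times> Pow {1..n}"]) auto

lemma Ap_Pairs: "j \<in> {1..B} \<Longrightarrow> w \<in> space P \<Longrightarrow> Ap j w \<in> Pairs"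
  using Ap_sets unfolding Pairs_def by (auto simp: mem_Times_iff)

lemma Ap_eq_event: "j \<in> {1..B} \<Longrightarrow> {w \<in> space P. Ap j w = x} \<in> sets P"
proof -
  assume j: "j \<in> {1..B}"
  have "{w \<in> space P. Ap j w = x} = Ap j -` {x} \<inter> space P" by auto
  also have "\<dots> \<in> sets P" using measurable_sets[OF Ap_meas[OF j]] by simp
  finally show ?thesis .
qed

lemma Ap_decomp:
  assumes j: "j \<in> {1..B}"
  shows "{w \<in> space P. Q (Ap j w) w} = (\<Union>x\<in>Pairs. {w \<in> space P. Ap j w = x} \<inter> {w \<in> space P. Q x w})"
  using Ap_Pairs[OF j] by auto

lemma Ap_event:
  assumes j: "j \<in> {1..B}" and Q: "\<And>x. x \<in> Pairs \<Longrightarrow> {w \<in> space P. Q x w} \<in> sets P"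
  shows "{w \<in> space P. Q (Ap j w) w} \<in> sets P"
  unfolding Ap_decomp[OF j] using finite_Pairs Q Ap_eq_event[OF j]
  by (intro sets.finite_UN) auto

lemma pred_real_meas:
  assumes "{w \<in> space P. Q w} \<in> sets P"
  shows "(\<lambda>w. of_bool (Q w) :: real) \<in> borel_measurable P"
proof -
  have "(\<lambda>w. indicator {w \<in> space P. Q w} w :: real) \<in> borel_measurable P"
    by (rule borel_measurable_indicator[OF assms])
  then show ?thesis by (rule measurable_cong[THEN iffD1, rotated]) (simp add: indicator_def)
qed

end

lemma (in prob_space) indep_vars_reindex_inj:
  assumes ind: "indep_vars M' X I" and inj: "inj_on \<sigma> J" and sub: "\<sigma> ` J \<subseteq> I"
  shows "indep_vars (\<lambda>j. M' (\<sigma> j)) (\<lambda>j. X (\<sigma> j)) J"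
proof -
  define F where "F = (\<lambda>i. { X i -` A \<inter> space M | A. A \<in> sets (M' i)})"
  have rv: "\<forall>i\<in>I. random_variable (M' i) (X i)" and iF: "indep_sets F I"
    using ind unfolding indep_vars_def2 F_def by auto
  have "indep_sets (\<lambda>j. F (\<sigma> j)) J"
  proof (rule indep_setsI)
    fix j assume "j \<in> J"
    then show "F (\<sigma> j) \<subseteq> events" using iF sub unfolding indep_sets_def by auto
  next
    fix A K assume K: "K \<noteq> {}" "K \<subseteq> J" "finite K" and A: "\<forall>j\<in>K. A j \<in> F (\<sigma> j)"
    have injK: "inj_on \<sigma> K" using inj inj_on_subset K(2) by blast
    define A' where "A' = (\<lambda>i. A (the_inv_into K \<sigma> i))"
    have A'\<sigma>: "A' (\<sigma> j) = A j" if "j \<in> K" for j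
      unfolding A'_def using the_inv_into_f_f[OF injK that] by simp
    have "prob (\<Inter>j\<in>K. A j) = prob (\<Inter>i\<in>\<sigma> ` K. A' i)"
      using A'\<sigma> by (intro arg_cong[where f=prob]) auto
    also have "\<dots> = (\<Prod>i\<in>\<sigma> ` K. prob (A' i))"
      using K sub A A'\<sigma> by (intro indep_setsD[OF iF]) auto
    also have "\<dots> = (\<Prod>j\<in>K. prob (A j))"
      using A'\<sigma> by (simp add: prod.reindex[OF injK])
    finally show "prob (\<Inter>j\<in>K. A j) = (\<Prod>j\<in>K. prob (A j))" .
  qed
  then show ?thesis unfolding indep_vars_def2 F_def using rv sub by auto
qed

context cpss begin

lemma m0_pos: "m0 \<ge> 1" using n2 by simp

lemma meas_SA:
  assumes AI: "A \<subseteq> I" and fin: "finite A" and cA: "card A = m0"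
  shows "(\<lambda>z. S m0 (\<lambda>i\<in>{1..m0}. z (sig A i))) \<in> measurable (PiM I (\<lambda>_. N)) (count_space UNIV)"
proof -
  have "(\<lambda>z. \<lambda>i\<in>{1..m0}. z (sig A i)) \<in> measurable (PiM I (\<lambda>_. N)) (PiM {1..m0} (\<lambda>_. N))"
  proof (intro measurable_restrict measurable_component_singleton)
    fix i assume "i \<in> {1..m0}"
    then show "sig A i \<in> I" using sig_mem[OF fin] cA AI by auto
  qed
  then show ?thesis using measurable_compose S_meas by blast
qed

lemma set_SA:
  assumes AI: "A \<subseteq> I" and fin: "finite A" and cA: "card A = m0"
  shows "{z \<in> space (PiM I (\<lambda>_. N)). k \<in> S m0 (\<lambda>i\<in>{1..m0}. z (sig A i))} \<in> sets (PiM I (\<lambda>_. N))"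
proof -
  have "{z \<in> space (PiM I (\<lambda>_. N)). k \<in> S m0 (\<lambda>i\<in>{1..m0}. z (sig A i))}
      = (\<lambda>z. S m0 (\<lambda>i\<in>{1..m0}. z (sig A i))) -` {X. k \<in> X} \<inter> space (PiM I (\<lambda>_. N))" by auto
  also have "\<dots> \<in> sets (PiM I (\<lambda>_. N))"
    using measurable_sets[OF meas_SA[OF assms], of "{X. k \<in> X}"] by simp
  finally show ?thesis .
qed

definition Qk :: "nat \<Rightarrow> (nat \<Rightarrow> 'z) set" where
  "Qk k = {z \<in> space (PiM {1..m0} (\<lambda>_. N)). k \<in> S m0 z}"

definition D :: "'z measure" where "D = distr P N (Z 1)"

lemma prob_Shat:
  assumes A: "A \<subseteq> {1..n}" and cA: "card A = m0"
  shows "prob {w \<in> space P. k \<in> Shat S Z A w} = measure (PiM {1..m0} (\<lambda>_. D)) (Qk k)"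
proof -
  have fin: "finite A" using A finite_subset by blast
  have sigA: "sig A i \<in> {1..n}" if "i \<in> {1..m0}" for i
    using sig_mem[OF fin, of i] that cA A by auto
  define V where "V = (\<lambda>w. \<lambda>i\<in>{1..m0}. Z (sig A i) w)"
  have im: "sig A ` {1..m0} \<subseteq> {1..n}" using sigA by blast
  have ind: "indep_vars (\<lambda>_. N) (\<lambda>i. Z (sig A i)) {1..m0}"
    using indep_vars_reindex_inj[OF Z_indep _ im] sig_inj[OF fin] cA by simp
  have rv: "random_variable N (Z (sig A i))" if "i \<in> {1..m0}" for i
    using Z_meas sigA that by blast
  have Vm: "V \<in> measurable P (PiM {1..m0} (\<lambda>_. N))"
    unfolding V_def using rv by (intro measurable_restrict) auto
  have "distr P (PiM {1..m0} (\<lambda>_. N)) V = PiM {1..m0} (\<lambda>i. distr P N (Z (sig A i)))"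
    unfolding V_def using indep_vars_iff_distr_eq_PiM'[where I="{1..m0}" and M'="\<lambda>_. N" and X="\<lambda>i. Z (sig A i)"] ind rv m0_pos
    by auto
  also have "\<dots> = PiM {1..m0} (\<lambda>_. D)"
    unfolding D_def using Z_ident sigA by (intro PiM_cong) auto
  finally have dV: "distr P (PiM {1..m0} (\<lambda>_. N)) V = PiM {1..m0} (\<lambda>_. D)" .
  have Qs: "Qk k \<in> sets (PiM {1..m0} (\<lambda>_. N))"
  proof -
    have "Qk k = S m0 -` {X. k \<in> X} \<inter> space (PiM {1..m0} (\<lambda>_. N))" unfolding Qk_def by auto
    also have "\<dots> \<in> sets (PiM {1..m0} (\<lambda>_. N))"
      using measurable_sets[OF S_meas[rule_format, of m0], of "{X. k \<in> X}"] by simp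
    finally show ?thesis .
  qed
  have "measure (PiM {1..m0} (\<lambda>_. D)) (Qk k) = prob (V -` Qk k \<inter> space P)"
    unfolding dV[symmetric] by (rule measure_distr[OF Vm Qs])
  also have "V -` Qk k \<inter> space P = {w \<in> space P. k \<in> Shat S Z A w}"
  proof -
    have "V w \<in> space (PiM {1..m0} (\<lambda>_. N))" if "w \<in> space P" for w
      using measurable_space[OF Vm that] .
    moreover have "Shat S Z A w = S m0 (V w)" for w
      unfolding V_def using Shat_restrict[OF fin] cA by simp
    ultimately show ?thesis unfolding Qk_def by auto
  qed
  finally show ?thesis by simp
qed

lemma prob_pair:
  assumes A1: "A1 \<subseteq> {1..n}" "card A1 = m0" and A2: "A2 \<subseteq> {1..n}" "card A2 = m0"
    and disj: "A1 \<inter> A2 = {}"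
  shows "prob {w \<in> space P. k \<in> Shat S Z A1 w \<and> k \<in> Shat S Z A2 w}
       = prob {w \<in> space P. k \<in> Shat S Z A1 w} * prob {w \<in> space P. k \<in> Shat S Z A2 w}"
proof -
  have fin1: "finite A1" using A1 finite_subset by blast
  have fin2: "finite A2" using A2 finite_subset by blast
  define W where "W = (\<lambda>A w. restrict (\<lambda>i. Z i w) A)"
  define QA where "QA = (\<lambda>A. {z \<in> space (PiM A (\<lambda>_. N)). k \<in> S m0 (\<lambda>i\<in>{1..m0}. z (sig A i))})"
  have iv: "indep_var (PiM A1 (\<lambda>_. N)) (W A1) (PiM A2 (\<lambda>_. N)) (W A2)"
    unfolding W_def using indep_var_restrict[OF Z_indep disj] A1 A2 by auto
  have Wm: "W A \<in> measurable P (PiM A (\<lambda>_. N))" if "A \<subseteq> {1..n}" for A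
    unfolding W_def using that by (intro measurable_restrict Z_meas) auto
  have ev: "{w \<in> space P. k \<in> Shat S Z A w} = W A -` QA A \<inter> space P"
    if "A \<subseteq> {1..n}" "card A = m0" for A
  proof -
    have fin: "finite A" using that finite_subset by blast
    have "W A w \<in> space (PiM A (\<lambda>_. N))" if "w \<in> space P" for w
      using measurable_space[OF Wm \<open>w \<in> space P\<close>] \<open>A \<subseteq> {1..n}\<close> by blast
    moreover have "Shat S Z A w = S m0 (\<lambda>i\<in>{1..m0}. W A w (sig A i))" for w
    proof -
      have "(\<lambda>i\<in>{1..m0}. W A w (sig A i)) = (\<lambda>i\<in>{1..m0}. Z (sig A i) w)"
        unfolding W_def using sig_mem[OF fin] \<open>card A = m0\<close> by (auto simp: fun_eq_iff)
      then show ?thesis using Shat_restrict[OF fin] \<open>card A = m0\<close> by simp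
    qed
    ultimately show ?thesis unfolding QA_def by auto
  qed
  have Q1: "QA A1 \<in> sets (PiM A1 (\<lambda>_. N))" unfolding QA_def using set_SA[of A1 A1] fin1 A1 by simp
  have Q2: "QA A2 \<in> sets (PiM A2 (\<lambda>_. N))" unfolding QA_def using set_SA[of A2 A2] fin2 A2 by simp
  have "{w \<in> space P. k \<in> Shat S Z A1 w \<and> k \<in> Shat S Z A2 w} = (\<lambda>x. (W A1 x, W A2 x)) -` (QA A1 \<times> QA A2) \<inter> space P"
    using ev[OF A1] ev[OF A2] by auto
  then show ?thesis using indep_varD[OF iv Q1 Q2] ev[OF A1] ev[OF A2] by simp
qed

lemma prob_Ap_indep:
  assumes j: "j \<in> {1..B}" and x: "x \<in> Pairs"
  shows "prob ({w \<in> space P. Ap j w = x} \<inter> {w \<in> space P. k \<in> Shat S Z (fst x) w \<and> k \<in> Shat S Z (snd x) w})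
       = prob {w \<in> space P. Ap j w = x} * prob {w \<in> space P. k \<in> Shat S Z (fst x) w \<and> k \<in> Shat S Z (snd x) w}"
proof -
  obtain A1 A2 where x12: "x = (A1, A2)" by (cases x)
  have A1: "A1 \<subseteq> {1..n}" "card A1 = m0" and A2: "A2 \<subseteq> {1..n}" "card A2 = m0"
    using x unfolding Pairs_def x12 by auto
  have fin1: "finite A1" using A1 finite_subset by blast
  have fin2: "finite A2" using A2 finite_subset by blast
  define ZV where "ZV = (\<lambda>w. \<lambda>i\<in>{1..n}. Z i w)"
  define AV where "AV = (\<lambda>w. \<lambda>j\<in>{1..B}. Ap j w)"
  define X where "X = {z \<in> space (PiM {1..n} (\<lambda>_. N)). k \<in> S m0 (\<lambda>i\<in>{1..m0}. z (sig A1 i))}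
                    \<inter> {z \<in> space (PiM {1..n} (\<lambda>_. N)). k \<in> S m0 (\<lambda>i\<in>{1..m0}. z (sig A2 i))}"
  define Y where "Y = (\<lambda>y. y j) -` {x} \<inter> space (PiM {1..B} (\<lambda>_. count_space UNIV :: (nat set \<times> nat set) measure))"
  have Xs: "X \<in> sets (PiM {1..n} (\<lambda>_. N))"
    unfolding X_def using set_SA[OF A1(1) fin1 A1(2)] set_SA[OF A2(1) fin2 A2(2)] by auto
  have Ys: "Y \<in> sets (PiM {1..B} (\<lambda>_. count_space UNIV :: (nat set \<times> nat set) measure))"
    unfolding Y_def using measurable_sets[OF measurable_component_singleton[OF j], of "{x}"] by simp
  have ZVm: "ZV \<in> measurable P (PiM {1..n} (\<lambda>_. N))"
    unfolding ZV_def by (intro measurable_restrict Z_meas) auto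
  have AVm: "AV \<in> measurable P (PiM {1..B} (\<lambda>_. count_space UNIV))"
    unfolding AV_def by (intro measurable_restrict Ap_meas) auto
  have eX: "{w \<in> space P. k \<in> Shat S Z A1 w \<and> k \<in> Shat S Z A2 w} = ZV -` X \<inter> space P"
  proof -
    have r: "(\<lambda>i\<in>{1..m0}. ZV w (sig A i)) = (\<lambda>i\<in>{1..m0}. Z (sig A i) w)"
      if "A \<subseteq> {1..n}" "card A = m0" for A w
    proof -
      have fA: "finite A" using that finite_subset by blast
      have "sig A i \<in> {1..n}" if "i \<in> {1..m0}" for i
        using sig_mem[OF fA, of i] \<open>A \<subseteq> {1..n}\<close> \<open>card A = m0\<close> that by auto
      then show ?thesis unfolding ZV_def by (auto simp: fun_eq_iff)
    qed
    have "ZV w \<in> space (PiM {1..n} (\<lambda>_. N))" if "w \<in> space P" for w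
      using measurable_space[OF ZVm that] .
    then show ?thesis unfolding X_def using r[OF A1] r[OF A2] Shat_restrict[OF fin1] Shat_restrict[OF fin2] A1 A2
      by auto
  qed
  have eY: "{w \<in> space P. Ap j w = x} = AV -` Y \<inter> space P"
  proof -
    have "AV w \<in> space (PiM {1..B} (\<lambda>_. count_space UNIV))" if "w \<in> space P" for w
      using measurable_space[OF AVm that] .
    then show ?thesis unfolding Y_def AV_def using j by auto
  qed
  have "prob ((ZV -` X \<inter> space P) \<inter> (AV -` Y \<inter> space P)) = prob (ZV -` X \<inter> space P) * prob (AV -` Y \<inter> space P)"
    by (rule indep_setD[OF Ap_Z_indep]) (use Xs Ys in \<open>auto simp: ZV_def AV_def\<close>)
  moreover have "{w \<in> space P. Ap j w = x} \<inter> {w \<in> space P. k \<in> Shat S Z (fst x) w \<and> k \<in> Shat S Z (snd x) w}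
      = (ZV -` X \<inter> space P) \<inter> (AV -` Y \<inter> space P)"
    using eX eY unfolding x12 by auto
  moreover have "{w \<in> space P. k \<in> Shat S Z (fst x) w \<and> k \<in> Shat S Z (snd x) w} = ZV -` X \<inter> space P"
    using eX unfolding x12 by simp
  ultimately show ?thesis using eY by (simp add: mult.commute)
qed

end

lemma sum_of_bool_card:
  assumes "finite J"
  shows "(\<Sum>j\<in>J. of_bool (Q j) :: real) = real (card {j\<in>J. Q j})"
  using assms
proof (induction J rule: finite_induct)
  case empty then show ?case by simp
next
  case (insert x F)
  have "{j \<in> insert x F. Q j} = (if Q x then insert x {j\<in>F. Q j} else {j\<in>F. Q j})" by auto
  then show ?case using insert by auto
qed

context cpss begin

definition pk :: "nat \<Rightarrow> real" where "pk k = measure (PiM {1..m0} (\<lambda>_. D)) (Qk k)"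

lemma sel_prob_pk: "sel_prob P S Z m0 k = pk k"
  unfolding sel_prob_def pk_def using n2 by (intro prob_Shat) auto

lemma pk_nonneg: "pk k \<ge> 0" unfolding pk_def by simp

definition Ej :: "nat \<Rightarrow> nat \<Rightarrow> 'a set" where
  "Ej k j = {w \<in> space P. k \<in> Shat S Z (fst (Ap j w)) w \<and> k \<in> Shat S Z (snd (Ap j w)) w}"

definition Ef :: "nat \<Rightarrow> nat \<Rightarrow> 'a set" where
  "Ef k j = {w \<in> space P. k \<in> Shat S Z (fst (Ap j w)) w}"

definition Es :: "nat \<Rightarrow> nat \<Rightarrow> 'a set" where
  "Es k j = {w \<in> space P. k \<in> Shat S Z (snd (Ap j w)) w}"

lemma Pairs_sub: "x \<in> Pairs \<Longrightarrow> fst x \<subseteq> {1..n} \<and> snd x \<subseteq> {1..n} \<and> card (fst x) = m0 \<and> card (snd x) = m0 \<and> fst x \<inter> snd x = {}"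
  unfolding Pairs_def by (auto simp: mem_Times_iff)

lemma Ej_sets: "j \<in> {1..B} \<Longrightarrow> Ej k j \<in> sets P"
  unfolding Ej_def
proof (rule Ap_event[where Q="\<lambda>x w. k \<in> Shat S Z (fst x) w \<and> k \<in> Shat S Z (snd x) w"])
  fix x assume "x \<in> Pairs"
  then have "{w \<in> space P. k \<in> Shat S Z (fst x) w} \<in> sets P" "{w \<in> space P. k \<in> Shat S Z (snd x) w} \<in> sets P"
    using Shat_event Pairs_sub by auto
  then have "{w \<in> space P. k \<in> Shat S Z (fst x) w} \<inter> {w \<in> space P. k \<in> Shat S Z (snd x) w} \<in> sets P" by auto
  moreover have "{w \<in> space P. k \<in> Shat S Z (fst x) w \<and> k \<in> Shat S Z (snd x) w}
     = {w \<in> space P. k \<in> Shat S Z (fst x) w} \<inter> {w \<in> space P. k \<in> Shat S Z (snd x) w}" by auto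
  ultimately show "{w \<in> space P. k \<in> Shat S Z (fst x) w \<and> k \<in> Shat S Z (snd x) w} \<in> sets P" by simp
qed

lemma Ef_sets: "j \<in> {1..B} \<Longrightarrow> Ef k j \<in> sets P"
  unfolding Ef_def by (rule Ap_event[where Q="\<lambda>x w. k \<in> Shat S Z (fst x) w"]) (use Shat_event Pairs_sub in auto)

lemma Es_sets: "j \<in> {1..B} \<Longrightarrow> Es k j \<in> sets P"
  unfolding Es_def by (rule Ap_event[where Q="\<lambda>x w. k \<in> Shat S Z (snd x) w"]) (use Shat_event Pairs_sub in auto)

lemma prob_Ej:
  assumes j: "j \<in> {1..B}"
  shows "prob (Ej k j) = (pk k)^2"
proof -
  define Dx where "Dx = (\<lambda>x. {w \<in> space P. k \<in> Shat S Z (fst x) w \<and> k \<in> Shat S Z (snd x) w})"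
  define Ax where "Ax = (\<lambda>x. {w \<in> space P. Ap j w = x})"
  have Ej_eq: "Ej k j = (\<Union>x\<in>Pairs. Ax x \<inter> Dx x)"
    unfolding Ej_def Ax_def Dx_def by (rule Ap_decomp[OF j])
  have Axs: "Ax x \<in> sets P" for x unfolding Ax_def by (rule Ap_eq_event[OF j])
  have Dxs: "Dx x \<in> sets P" if "x \<in> Pairs" for x
  proof -
    have "{w \<in> space P. k \<in> Shat S Z (fst x) w} \<in> sets P" "{w \<in> space P. k \<in> Shat S Z (snd x) w} \<in> sets P"
      using Shat_event Pairs_sub that by auto
    moreover have "Dx x = {w \<in> space P. k \<in> Shat S Z (fst x) w} \<inter> {w \<in> space P. k \<in> Shat S Z (snd x) w}"
      unfolding Dx_def by auto
    ultimately show ?thesis by auto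
  qed
  have disj: "disjoint_family_on (\<lambda>x. Ax x \<inter> Dx x) Pairs"
    unfolding disjoint_family_on_def Ax_def by auto
  have disj2: "disjoint_family_on Ax Pairs"
    unfolding disjoint_family_on_def Ax_def by auto
  have pD: "prob (Dx x) = (pk k)^2" if "x \<in> Pairs" for x
  proof -
    have x: "fst x \<subseteq> {1..n}" "snd x \<subseteq> {1..n}" "card (fst x) = m0" "card (snd x) = m0" "fst x \<inter> snd x = {}"
      using Pairs_sub[OF that] by auto
    have "prob (Dx x) = prob {w \<in> space P. k \<in> Shat S Z (fst x) w} * prob {w \<in> space P. k \<in> Shat S Z (snd x) w}"
      unfolding Dx_def by (rule prob_pair) (use x in auto)
    also have "\<dots> = pk k * pk k" unfolding pk_def using x by (simp add: prob_Shat)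
    finally show ?thesis by (simp add: power2_eq_square)
  qed
  have "prob (Ej k j) = (\<Sum>x\<in>Pairs. prob (Ax x \<inter> Dx x))"
    unfolding Ej_eq using finite_Pairs Axs Dxs disj by (intro finite_measure_finite_Union) auto
  also have "\<dots> = (\<Sum>x\<in>Pairs. prob (Ax x) * (pk k)^2)"
    using prob_Ap_indep[OF j] pD unfolding Ax_def Dx_def by (intro sum.cong) auto
  also have "\<dots> = (\<Sum>x\<in>Pairs. prob (Ax x)) * (pk k)^2" by (simp add: sum_distrib_right)
  also have "(\<Sum>x\<in>Pairs. prob (Ax x)) = prob (\<Union>x\<in>Pairs. Ax x)"
    using finite_Pairs Axs disj2 by (intro finite_measure_finite_Union[symmetric]) auto
  also have "(\<Union>x\<in>Pairs. Ax x) = space P" unfolding Ax_def using Ap_Pairs[OF j] by auto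
  finally show ?thesis by (simp add: prob_space)
qed

lemma Pi_tilde_eq:
  assumes w: "w \<in> space P"
  shows "Pi_tilde S Z Ap B k w = (\<Sum>j=1..B. indicator (Ej k j) w) / real B"
  unfolding Pi_tilde_def Ej_def using w by (intro arg_cong2[where f="(/)"] sum.cong) (auto simp: indicator_def)

definition cnt :: "nat \<Rightarrow> 'a \<Rightarrow> nat" where
  "cnt k w = card {j \<in> {1..B}. w \<in> Ej k j}"

lemma Pi_tilde_cnt:
  assumes w: "w \<in> space P"
  shows "Pi_tilde S Z Ap B k w = real (cnt k w) / real B"
proof -
  have "(\<Sum>j=1..B. indicator (Ej k j) w :: real) = (\<Sum>j=1..B. of_bool (w \<in> Ej k j))"
    by (simp add: indicator_def)
  also have "\<dots> = real (cnt k w)" unfolding cnt_def by (rule sum_of_bool_card) simp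
  finally show ?thesis using Pi_tilde_eq[OF w] by simp
qed

lemma cnt_le: "cnt k w \<le> B"
proof -
  have "cnt k w \<le> card {1..B}" unfolding cnt_def by (rule card_mono) auto
  then show ?thesis by simp
qed

lemma Pi_tilde_meas: "Pi_tilde S Z Ap B k \<in> borel_measurable P"
proof -
  have "(\<lambda>w. (\<Sum>j=1..B. indicator (Ej k j) w) / real B :: real) \<in> borel_measurable P"
    using Ej_sets by (intro borel_measurable_divide borel_measurable_sum borel_measurable_indicator
        borel_measurable_const) auto
  then show ?thesis by (rule measurable_cong[THEN iffD1, rotated]) (simp add: Pi_tilde_eq)
qed

lemma Pi_hat_meas: "Pi_hat S Z Ap B k \<in> borel_measurable P"
proof -
  have "(\<lambda>w. (\<Sum>j=1..B. indicator (Ef k j) w + indicator (Es k j) w) / (2 * real B) :: real) \<in> borel_measurable P"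
    using Ef_sets Es_sets by (intro borel_measurable_divide borel_measurable_sum borel_measurable_add
        borel_measurable_indicator borel_measurable_const) auto
  then show ?thesis
    by (rule measurable_cong[THEN iffD1, rotated])
       (auto simp: Pi_hat_def Ef_def Es_def indicator_def intro!: arg_cong2[where f="(/)"] sum.cong)
qed

lemma Pi_hat_le:
  assumes w: "w \<in> space P"
  shows "Pi_hat S Z Ap B k w \<le> 1/2 + Pi_tilde S Z Ap B k w / 2"
proof -
  let ?a = "\<lambda>j. of_bool (k \<in> Shat S Z (fst (Ap j w)) w) :: real"
  let ?b = "\<lambda>j. of_bool (k \<in> Shat S Z (snd (Ap j w)) w) :: real"
  have "(\<Sum>j=1..B. ?a j + ?b j) \<le> (\<Sum>j=1..B. 1 + ?a j * ?b j)"
    by (intro sum_mono) auto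
  also have "\<dots> = real B + (\<Sum>j=1..B. ?a j * ?b j)" by (simp add: sum.distrib)
  finally have "(\<Sum>j=1..B. ?a j + ?b j) \<le> real B + (\<Sum>j=1..B. ?a j * ?b j)" .
  moreover have "real B > 0" using Bpos by simp
  ultimately show ?thesis unfolding Pi_hat_def Pi_tilde_def by (simp add: field_simps)
qed

end

context cpss begin

definition Fi :: "nat \<Rightarrow> nat \<Rightarrow> 'a set" where
  "Fi k i = {w \<in> space P. Pi_tilde S Z Ap B k w = real i / real B}"

lemma Fi_cnt: "Fi k i = {w \<in> space P. cnt k w = i}"
proof -
  have "real B > 0" using Bpos by simp
  then show ?thesis unfolding Fi_def using Pi_tilde_cnt by (auto simp: divide_cancel_right)
qed

lemma Fi_sets: "Fi k i \<in> sets P"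
proof -
  have "Fi k i = Pi_tilde S Z Ap B k -` {real i / real B} \<inter> space P" unfolding Fi_def by auto
  also have "\<dots> \<in> sets P" by (rule measurable_sets[OF Pi_tilde_meas]) simp
  finally show ?thesis .
qed

lemma Fi_disj: "disjoint_family_on (Fi k) I"
  unfolding disjoint_family_on_def Fi_cnt by auto

lemma sum_Fi: "(\<Sum>i\<le>B. prob (Fi k i)) = 1"
proof -
  have "(\<Sum>i\<le>B. prob (Fi k i)) = prob (\<Union>i\<le>B. Fi k i)"
    using Fi_sets Fi_disj by (intro finite_measure_finite_Union[symmetric]) auto
  also have "(\<Union>i\<le>B. Fi k i) = space P" unfolding Fi_cnt using cnt_le by auto
  finally show ?thesis by (simp add: prob_space)
qed

lemma moment_Fi: "(\<Sum>i\<le>B. real i * prob (Fi k i)) = real B * (pk k)^2"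
proof -
  have Bp: "real B > 0" using Bpos by simp
  have int1: "(\<integral>w. Pi_tilde S Z Ap B k w \<partial>P) = (\<integral>w. (\<Sum>i\<le>B. (real i / real B) * indicator (Fi k i) w) \<partial>P)"
  proof (rule Bochner_Integration.integral_cong[OF refl])
    fix w assume w: "w \<in> space P"
    have "(\<Sum>i\<le>B. (real i / real B) * indicator (Fi k i) w) = (\<Sum>i\<le>B. if i = cnt k w then real i / real B else 0)"
      unfolding Fi_cnt using w by (intro sum.cong) (auto simp: indicator_def)
    also have "\<dots> = real (cnt k w) / real B" using cnt_le by simp
    finally show "Pi_tilde S Z Ap B k w = (\<Sum>i\<le>B. (real i / real B) * indicator (Fi k i) w)"
      using Pi_tilde_cnt[OF w] by simp
  qed
  also have "\<dots> = (\<Sum>i\<le>B. (\<integral>w. (real i / real B) * indicator (Fi k i) w \<partial>P))"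
  proof (rule Bochner_Integration.integral_sum)
    fix i assume "i \<in> {..B}"
    have "integrable P (indicator (Fi k i) :: 'a \<Rightarrow> real)"
      by (rule integrable_real_indicator[OF Fi_sets]) (simp add: less_top[symmetric])
    then show "integrable P (\<lambda>w. (real i / real B) * indicator (Fi k i) w)"
      by (rule integrable_mult_right)
  qed
  also have "\<dots> = (\<Sum>i\<le>B. (real i / real B) * prob (Fi k i))"
    using Fi_sets by (simp add: Int_absorb2 sets.sets_into_space)
  finally have e1: "(\<integral>w. Pi_tilde S Z Ap B k w \<partial>P) = (\<Sum>i\<le>B. (real i / real B) * prob (Fi k i))" .
  have "(\<integral>w. Pi_tilde S Z Ap B k w \<partial>P) = (\<integral>w. (1 / real B) * (\<Sum>j=1..B. indicator (Ej k j) w) \<partial>P)"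
    by (rule Bochner_Integration.integral_cong[OF refl]) (simp add: Pi_tilde_eq)
  also have "\<dots> = (1 / real B) * (\<integral>w. (\<Sum>j=1..B. indicator (Ej k j) w) \<partial>P)"
    by (rule integral_mult_right_zero)
  also have "(\<integral>w. (\<Sum>j=1..B. indicator (Ej k j) w) \<partial>P) = (\<Sum>j=1..B. (\<integral>w. indicator (Ej k j) w \<partial>P) :: real)"
  proof (rule Bochner_Integration.integral_sum)
    fix j assume "j \<in> {1..B}"
    show "integrable P (\<lambda>w. indicator (Ej k j) w :: real)"
      by (rule integrable_real_indicator[OF Ej_sets[OF \<open>j \<in> {1..B}\<close>]]) (simp add: less_top[symmetric])
  qed
  also have "\<dots> = (\<Sum>j=1..B. prob (Ej k j))"
    using Ej_sets by (simp add: Int_absorb2 sets.sets_into_space)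
  also have "\<dots> = (\<Sum>j=1..B. (pk k)^2)" using prob_Ej by simp
  also have "\<dots> = real B * (pk k)^2" by simp
  finally have "(\<integral>w. Pi_tilde S Z Ap B k w \<partial>P) = (1 / real B) * (real B * (pk k)^2)" .
  also have "\<dots> = (pk k)^2" using Bp by simp
  finally have "(\<Sum>i\<le>B. (real i / real B) * prob (Fi k i)) = (pk k)^2" using e1 by simp
  then have "(\<Sum>i\<le>B. real i * prob (Fi k i)) / real B = (pk k)^2"
    by (simp add: sum_divide_distrib)
  then show ?thesis using Bp by (simp add: field_simps)
qed

lemma tail_Fi:
  assumes t: "t \<le> B" and tau: "\<tau> = 1/2 + real t / (2 * real B)"
  shows "prob {w \<in> space P. \<tau> \<le> Pi_hat S Z Ap B k w} \<le> (\<Sum>i\<le>B. of_bool (t \<le> i) * prob (Fi k i))"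
proof -
  have Bp: "real B > 0" using Bpos by simp
  have sub: "{w \<in> space P. \<tau> \<le> Pi_hat S Z Ap B k w} \<subseteq> (\<Union>i\<in>{t..B}. Fi k i)"
  proof
    fix w assume "w \<in> {w \<in> space P. \<tau> \<le> Pi_hat S Z Ap B k w}"
    then have w: "w \<in> space P" and le: "\<tau> \<le> Pi_hat S Z Ap B k w" by auto
    have h1: "Pi_hat S Z Ap B k w \<le> 1/2 + Pi_tilde S Z Ap B k w / 2" by (rule Pi_hat_le[OF w])
    have "\<tau> \<le> 1/2 + real (cnt k w) / real B / 2" using le h1 Pi_tilde_cnt[OF w, of k] by simp
    then have "real t / (2 * real B) \<le> real (cnt k w) / (2 * real B)" unfolding tau by simp
    then have "real t \<le> real (cnt k w)" using Bp by (simp add: divide_right_mono_neg field_simps)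
    then have "t \<le> cnt k w" by simp
    then show "w \<in> (\<Union>i\<in>{t..B}. Fi k i)" unfolding Fi_cnt using w cnt_le by auto
  qed
  have "prob {w \<in> space P. \<tau> \<le> Pi_hat S Z Ap B k w} \<le> prob (\<Union>i\<in>{t..B}. Fi k i)"
    using sub Fi_sets by (intro finite_measure_mono) auto
  also have "\<dots> = (\<Sum>i\<in>{t..B}. prob (Fi k i))"
    using Fi_sets Fi_disj by (intro finite_measure_finite_Union) auto
  also have "\<dots> = (\<Sum>i\<le>B. of_bool (t \<le> i) * prob (Fi k i))"
  proof -
    have "(\<Sum>i\<le>B. of_bool (t \<le> i) * prob (Fi k i)) = (\<Sum>i\<le>B. if t \<le> i then prob (Fi k i) else 0)"
      by (intro sum.cong) auto
    also have "\<dots> = (\<Sum>i\<in>{..B} \<inter> {i. t \<le> i}. prob (Fi k i))"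
      by (simp add: sum.If_cases)
    also have "{..B} \<inter> {i. t \<le> i} = {t..B}" by auto
    finally show ?thesis by simp
  qed
  finally show ?thesis .
qed

end

lemma C_tau_Rb:
  assumes t: "2 \<le> t" "t \<le> B" and tau: "\<tau> = 1/2 + real t / (2 * real B)"
  shows "C_tau \<tau> B = Rb B t * real B"
proof -
  have Bp: "real B > 0" using t by simp
  have iff: "\<tau> \<le> 3/4 \<longleftrightarrow> 2 * t \<le> B"
  proof -
    have "\<tau> \<le> 3/4 \<longleftrightarrow> real t / (2 * real B) \<le> 1/4" unfolding tau by linarith
    also have "\<dots> \<longleftrightarrow> 4 * real t \<le> 2 * real B" using Bp by (simp add: divide_le_eq)
    also have "\<dots> \<longleftrightarrow> 2 * t \<le> B" by linarith
    finally show ?thesis .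
  qed
  show ?thesis
  proof (cases "2 * t \<le> B")
    case True
    have tp: "2 * real t - 1 > 0" using t by simp
    have "2 * (2 * \<tau> - 1 - 1 / (2 * real B)) = (2 * real t - 1) / real B"
      unfolding tau using Bp by (simp add: field_simps)
    then show ?thesis using True iff tp Bp unfolding C_tau_def Rb_def by simp
  next
    case False
    have e1: "1 - \<tau> + 1 / (2 * real B) = (real B - real t + 1) / (2 * real B)"
      unfolding tau using Bp by (simp add: field_simps)
    have e2: "1 + 1 / real B = (real B + 1) / real B" using Bp by (simp add: field_simps)
    have "4 * (1 - \<tau> + 1 / (2 * real B)) / (1 + 1 / real B) = 2 * (real B - real t + 1) / (real B + 1)"
    proof -
      have nz: "real B \<noteq> 0" "real B + 1 \<noteq> 0" using Bp by auto
      have "4 * ((real B - real t + 1) / (2 * real B)) / ((real B + 1) / real B)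
          = 4 * ((real B - real t + 1) / (2 * real B)) * (real B / (real B + 1))" by simp
      also have "\<dots> = 2 * (real B - real t + 1) / (real B + 1)" using Bp by (simp add: divide_simps) (simp add: algebra_simps)
      finally show ?thesis unfolding e1 e2 .
    qed
    moreover have "2 * (real B - real t + 1) / (real B * (real B + 1)) * real B = 2 * (real B - real t + 1) / (real B + 1)"
      using Bp by (simp add: divide_simps)
    ultimately show ?thesis using False iff unfolding C_tau_def Rb_def by simp
  qed
qed

context cpss begin

lemma per_k:
  assumes t: "2 \<le> t" "t \<le> B" and tau: "\<tau> = 1/2 + real t / (2 * real B)"
    and th: "0 \<le> \<theta>" "\<theta> \<le> 1 / sqrt 3" and pkth: "pk k \<le> \<theta>"
    and low: "min (1/2 + \<theta>\<^sup>2) (1/2 + 1 / (2 * real B) + 3/4 * \<theta>\<^sup>2) < \<tau>"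
    and uni: "unimodal (\<lambda>i. prob (Fi k i)) B"
  shows "prob {w \<in> space P. \<tau> \<le> Pi_hat S Z Ap B k w} \<le> C_tau \<tau> B * \<theta> * pk k"
proof -
  have Bp: "real B > 0" using t by simp
  define f where "f = (\<lambda>i. prob (Fi k i))"
  define M where "M = (\<Sum>i\<le>B. real i * f i)"
  have M: "M = real B * (pk k)^2" unfolding M_def f_def by (rule moment_Fi)
  have p0: "pk k \<ge> 0" by (rule pk_nonneg)
  have pth2: "(pk k)^2 \<le> \<theta>^2" using power_mono[OF pkth p0] .
  have th3: "\<theta>^2 \<le> 1/3"
  proof -
    have "\<theta>^2 \<le> (1 / sqrt 3)^2" using power_mono[OF th(2) th(1)] .
    also have "\<dots> = 1/3" by (simp add: power_divide)
    finally show ?thesis .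
  qed
  have MB: "3 * M \<le> real B"
  proof -
    have "3 * M \<le> 3 * (real B * \<theta>^2)" unfolding M using pth2 Bp by simp
    also have "\<dots> \<le> real B" using th3 Bp by simp
    finally show ?thesis .
  qed
  have MBt: "M \<le> real B * \<theta>^2" unfolding M using pth2 Bp by simp
  have Mc: "2 * M < real t \<or> 3 * M < 2 * (real t - 1)"
  proof (cases "1/2 + \<theta>\<^sup>2 < \<tau>")
    case True
    then have "\<theta>^2 < real t / (2 * real B)" unfolding tau by simp
    then have "\<theta>^2 * (2 * real B) < real t" using Bp by (simp add: less_divide_eq)
    then show ?thesis using MBt by (auto simp: algebra_simps)
  next
    case False
    then have "1/2 + 1 / (2 * real B) + 3/4 * \<theta>\<^sup>2 < \<tau>" using low by (simp add: min_def split: if_splits)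
    then have "1 / (2 * real B) + 3/4 * \<theta>\<^sup>2 < real t / (2 * real B)" unfolding tau by simp
    then have "(1 / (2 * real B) + 3/4 * \<theta>\<^sup>2) * (4 * real B) < real t / (2 * real B) * (4 * real B)"
      using Bp by (intro mult_strict_right_mono) auto
    moreover have "(1 / (2 * real B) + 3/4 * \<theta>\<^sup>2) * (4 * real B) = 2 + 3 * (real B * \<theta>^2)"
      using Bp by (simp add: field_simps)
    moreover have "real t / (2 * real B) * (4 * real B) = 2 * real t"
      using Bp by (simp add: field_simps)
    ultimately have "2 + 3 * (real B * \<theta>^2) < 2 * real t" by simp
    then show ?thesis using MBt by simp
  qed
  have fnn: "f i \<ge> 0" for i unfolding f_def by simp
  have sum1: "(\<Sum>i\<le>B. f i) = 1" unfolding f_def by (rule sum_Fi)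
  have "prob {w \<in> space P. \<tau> \<le> Pi_hat S Z Ap B k w} \<le> (\<Sum>i\<le>B. of_bool (t \<le> i) * f i)"
    unfolding f_def by (rule tail_Fi[OF t(2) tau])
  also have "\<dots> \<le> Rb B t * M"
    unfolding M_def by (rule unimodal_bound[OF t fnn uni[folded f_def] sum1 MB[unfolded M_def] Mc[unfolded M_def]])
  also have "\<dots> = C_tau \<tau> B * (pk k)^2" unfolding M C_tau_Rb[OF t tau] by simp
  also have "\<dots> \<le> C_tau \<tau> B * (\<theta> * pk k)"
  proof (rule mult_left_mono)
    show "(pk k)^2 \<le> \<theta> * pk k" using mult_right_mono[OF pkth p0] by (simp add: power2_eq_square)
    show "C_tau \<tau> B \<ge> 0" unfolding C_tau_Rb[OF t tau] using Rb_nonneg[OF t] by simp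
  qed
  finally show ?thesis by (simp add: mult.assoc)
qed

end

theorem theorem2:
  fixes P :: "'a measure" and N :: "'z measure"
    and Z :: "nat \<Rightarrow> 'a \<Rightarrow> 'z"
    and S :: "nat \<Rightarrow> (nat \<Rightarrow> 'z) \<Rightarrow> nat set"
    and Ap :: "nat \<Rightarrow> 'a \<Rightarrow> nat set \<times> nat set"
    and n p B :: nat and \<theta> \<tau> :: real
  assumes P: "prob_space P"
    and n: "n \<ge> 2" and p: "p \<ge> 1" and B: "B \<ge> 1"
    and theta: "0 \<le> \<theta>" "\<theta> \<le> 1 / sqrt 3"
    \<comment> \<open>Z_1,...,Z_n i.i.d.\<close>
    and Z_indep: "prob_space.indep_vars P (\<lambda>_. N) Z {1..n}"
    and Z_ident: "\<forall>i\<in>{1..n}. distr P N (Z i) = distr P N (Z 1)"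
    \<comment> \<open>S is a variable selection procedure: a family of statistics with values in subsets of {1..p}\<close>
    and S_range: "\<forall>m z. S m z \<subseteq> {1..p}"
    and S_local: "\<forall>m z z'. (\<forall>i\<in>{1..m}. z i = z' i) \<longrightarrow> S m z = S m z'"
    and S_meas: "\<forall>m. S m \<in> measurable (PiM {1..m} (\<lambda>_. N)) (count_space UNIV)"
    \<comment> \<open>the random pairs of disjoint subsets of size n div 2\<close>
    and Ap_sets: "\<forall>j\<in>{1..B}. \<forall>w\<in>space P.
         fst (Ap j w) \<subseteq> {1..n} \<and> snd (Ap j w) \<subseteq> {1..n} \<and>
         card (fst (Ap j w)) = n div 2 \<and> card (snd (Ap j w)) = n div 2 \<and>
         fst (Ap j w) \<inter> snd (Ap j w) = {}"
    and Ap_indep: "prob_space.indep_vars P (\<lambda>_. count_space UNIV) Ap {1..B}"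
    and Ap_Z_indep: "prob_space.indep_set P
         {(\<lambda>w. \<lambda>i\<in>{1..n}. Z i w) -` X \<inter> space P | X. X \<in> sets (PiM {1..n} (\<lambda>_. N))}
         {(\<lambda>w. \<lambda>j\<in>{1..B}. Ap j w) -` Y \<inter> space P | Y. Y \<in> sets (PiM {1..B} (\<lambda>_. count_space UNIV))}"
    \<comment> \<open>unimodality of the law of Pi_tilde_B(k) for k in L_theta\<close>
    and unimod: "\<forall>k\<in>L_theta P S Z n p \<theta>.
         unimodal (\<lambda>i. measure P {w \<in> space P. Pi_tilde S Z Ap B k w = real i / real B}) B"
    and tau_grid: "\<exists>i::nat. 2 \<le> i \<and> i \<le> B \<and> \<tau> = 1/2 + real i / (2 * real B)"
    and tau_low: "min (1/2 + \<theta>\<^sup>2) (1/2 + 1 / (2 * real B) + 3/4 * \<theta>\<^sup>2) < \<tau>"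
    and tau_up: "\<tau> \<le> 1"
  shows "(\<integral>w. real (card (S_CPSS S Z Ap B p \<tau> w \<inter> L_theta P S Z n p \<theta>)) \<partial>P)
         \<le> C_tau \<tau> B * \<theta> *
           (\<integral>w. real (card (Shat S Z {1..n div 2} w \<inter> L_theta P S Z n p \<theta>)) \<partial>P)"
proof -
  interpret cpss P N Z S Ap n B
    by (intro cpss.intro cpss_axioms.intro P n B Z_indep Z_ident S_local S_meas Ap_sets Ap_indep Ap_Z_indep)
  obtain t :: nat where t: "2 \<le> t" "t \<le> B" and tau: "\<tau> = 1/2 + real t / (2 * real B)"
    using tau_grid by blast
  define L where "L = L_theta P S Z n p \<theta>"
  have Lsub: "L \<subseteq> {1..p}" unfolding L_def L_theta_def by auto
  have finL: "finite L" using Lsub finite_subset by blast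
  have pkL: "pk k \<le> \<theta>" if "k \<in> L" for k
    using that sel_prob_pk[of k] unfolding L_def L_theta_def by auto
  define H where "H = (\<lambda>k. {w \<in> space P. \<tau> \<le> Pi_hat S Z Ap B k w})"
  have Hs: "H k \<in> sets P" for k
  proof -
    have "H k = Pi_hat S Z Ap B k -` {\<tau>..} \<inter> space P" unfolding H_def by auto
    also have "\<dots> \<in> sets P" by (rule measurable_sets[OF Pi_hat_meas]) simp
    finally show ?thesis .
  qed
  define G where "G = (\<lambda>k. {w \<in> space P. k \<in> Shat S Z {1..n div 2} w})"
  have Gs: "G k \<in> sets P" for k unfolding G_def by (rule Shat_event) auto
  have intH: "(\<integral>w. real (card (S_CPSS S Z Ap B p \<tau> w \<inter> L)) \<partial>P) = (\<Sum>k\<in>L. prob (H k))"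
  proof -
    have "(\<integral>w. real (card (S_CPSS S Z Ap B p \<tau> w \<inter> L)) \<partial>P) = (\<integral>w. (\<Sum>k\<in>L. indicator (H k) w) \<partial>P)"
    proof (rule Bochner_Integration.integral_cong[OF refl])
      fix w assume w: "w \<in> space P"
      have "S_CPSS S Z Ap B p \<tau> w \<inter> L = {k \<in> L. \<tau> \<le> Pi_hat S Z Ap B k w}"
        unfolding S_CPSS_def using Lsub by auto
      then have "real (card (S_CPSS S Z Ap B p \<tau> w \<inter> L)) = (\<Sum>k\<in>L. of_bool (\<tau> \<le> Pi_hat S Z Ap B k w))"
        using sum_of_bool_card[OF finL] by simp
      also have "\<dots> = (\<Sum>k\<in>L. indicator (H k) w)" unfolding H_def using w by (simp add: indicator_def)
      finally show "real (card (S_CPSS S Z Ap B p \<tau> w \<inter> L)) = (\<Sum>k\<in>L. indicator (H k) w)" .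
    qed
    also have "\<dots> = (\<Sum>k\<in>L. (\<integral>w. indicator (H k) w \<partial>P) :: real)"
    proof (rule Bochner_Integration.integral_sum)
      fix k assume "k \<in> L"
      show "integrable P (\<lambda>w. indicator (H k) w :: real)"
        by (rule integrable_real_indicator[OF Hs]) (simp add: less_top[symmetric])
    qed
    also have "\<dots> = (\<Sum>k\<in>L. prob (H k))"
      using Hs by (simp add: Int_absorb2 sets.sets_into_space)
    finally show ?thesis .
  qed
  have intG: "(\<integral>w. real (card (Shat S Z {1..n div 2} w \<inter> L)) \<partial>P) = (\<Sum>k\<in>L. pk k)"
  proof -
    have "(\<integral>w. real (card (Shat S Z {1..n div 2} w \<inter> L)) \<partial>P) = (\<integral>w. (\<Sum>k\<in>L. indicator (G k) w) \<partial>P)"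
    proof (rule Bochner_Integration.integral_cong[OF refl])
      fix w assume w: "w \<in> space P"
      have "Shat S Z {1..n div 2} w \<inter> L = {k \<in> L. k \<in> Shat S Z {1..n div 2} w}" by auto
      then have "real (card (Shat S Z {1..n div 2} w \<inter> L)) = (\<Sum>k\<in>L. of_bool (k \<in> Shat S Z {1..n div 2} w))"
        using sum_of_bool_card[OF finL] by simp
      also have "\<dots> = (\<Sum>k\<in>L. indicator (G k) w)" unfolding G_def using w by (simp add: indicator_def)
      finally show "real (card (Shat S Z {1..n div 2} w \<inter> L)) = (\<Sum>k\<in>L. indicator (G k) w)" .
    qed
    also have "\<dots> = (\<Sum>k\<in>L. (\<integral>w. indicator (G k) w \<partial>P) :: real)"
    proof (rule Bochner_Integration.integral_sum)
      fix k assume "k \<in> L"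
      show "integrable P (\<lambda>w. indicator (G k) w :: real)"
        by (rule integrable_real_indicator[OF Gs]) (simp add: less_top[symmetric])
    qed
    also have "\<dots> = (\<Sum>k\<in>L. prob (G k))"
      using Gs by (simp add: Int_absorb2 sets.sets_into_space)
    also have "\<dots> = (\<Sum>k\<in>L. pk k)"
      using sel_prob_pk unfolding G_def sel_prob_def by simp
    finally show ?thesis .
  qed
  have per: "prob (H k) \<le> C_tau \<tau> B * \<theta> * pk k" if "k \<in> L" for k
  proof -
    have uni: "unimodal (\<lambda>i. prob (Fi k i)) B"
      using unimod that unfolding L_def Fi_def by simp
    show ?thesis unfolding H_def
      by (rule per_k[OF t tau theta pkL[OF that] tau_low[unfolded tau[symmetric]] uni])
  qed
  have "(\<Sum>k\<in>L. prob (H k)) \<le> (\<Sum>k\<in>L. C_tau \<tau> B * \<theta> * pk k)"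
    using per by (rule sum_mono)
  also have "\<dots> = C_tau \<tau> B * \<theta> * (\<Sum>k\<in>L. pk k)" by (simp add: sum_distrib_left)
  finally have "(\<Sum>k\<in>L. prob (H k)) \<le> C_tau \<tau> B * \<theta> * (\<Sum>k\<in>L. pk k)" .
  then have "(\<integral>w. real (card (S_CPSS S Z Ap B p \<tau> w \<inter> L)) \<partial>P)
      \<le> C_tau \<tau> B * \<theta> * (\<integral>w. real (card (Shat S Z {1..n div 2} w \<inter> L)) \<partial>P)"
    unfolding intH intG .
  then show ?thesis unfolding L_def .
qed

end
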